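(* Let $\mu>0$ and $\lambda_1>0$, and consider the system $$\frac{dx}{dt}=\lambda_1\bigl(2\mu y-4\mu xy-2x^2-2xy+x\bigr),\qquad \frac{dy}{dt}=\lambda_1\bigl(\mu y-4\mu y^2-2xy-2y^2+y\bigr).$$ Let $Q\subset\mathbb{R}^2$ be the closed quadrangle defined by $y\ge x/2$, $y\ge 1/2-x$, $y\le 1/3$, $y\le 1/2-x/2$, and let $(x_c,y_c)=\left(\frac{\mu+1}{2\mu+3},\frac{\mu+1}{4\mu+6}\right)$. Then $(x_c,y_c)$ is asymptotically stable in $Q$: for every initial condition $(x_0,y_0)\in Q$, the solution satisfies $\lim_{t\to\infty}(x(t),y(t))=(x_c,y_c)$.
   Context: $Q$ is the domain of convex mosaics in the inverse symbolic plane, with vertices $(1/3,1/6)$, $(1/2,1/4)$, $(1/3,1/3)$, $(1/6,1/3)$. *)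

theory Defs
  imports "HOL-Analysis.Analysis"
begin

definition quadQ :: "(real \<times> real) set" where
  "quadQ = {(x, y). y \<ge> x / 2 \<and> y \<ge> 1/2 - x \<and> y \<le> 1/3 \<and> y \<le> 1/2 - x / 2}"

definition fx :: "real \<Rightarrow> real \<Rightarrow> real \<Rightarrow> real \<Rightarrow> real" where
  "fx \<mu> lam x y = lam * (2*\<mu>*y - 4*\<mu>*x*y - 2*x^2 - 2*x*y + x)"

definition fy :: "real \<Rightarrow> real \<Rightarrow> real \<Rightarrow> real \<Rightarrow> real" where
  "fy \<mu> lam x y = lam * (\<mu>*y - 4*\<mu>*y^2 - 2*x*y - 2*y^2 + y)"

end

theory Submission
  imports Defs
begin

lemma within_to_at:
  assumes "(f has_real_derivative D) (at t within {0..})" "t > 0"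
  shows "(f has_real_derivative D) (at t)"
proof -
  have "(f has_real_derivative D) (at t within {0<..})"
    using assms(1) by (rule has_field_derivative_subset) (simp add: subset_eq)
  moreover have "at t within {0<..} = at t" using assms(2) by (intro at_within_open) auto
  ultimately show ?thesis by simp
qed

lemma cont_from_deriv:
  assumes "\<And>t. t \<ge> 0 \<Longrightarrow> (f has_real_derivative D t) (at t within {0..})"
  shows "continuous_on {0..} f"
  unfolding continuous_on_eq_continuous_within
proof
  fix t :: real assume "t \<in> {0..}"
  hence "(f has_real_derivative D t) (at t within {0..})" using assms by auto
  thus "continuous (at t within {0..}) f" by (rule DERIV_continuous)
qed
lemma linear_zero:
  fixes h a :: "real \<Rightarrow> real"
  assumes cont: "continuous_on {0..} a"
    and der: "\<And>t. t \<ge> 0 \<Longrightarrow> (h has_real_derivative a t * h t) (at t within {0..})"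
    and h0: "h 0 = 0" and T: "T \<ge> 0"
  shows "h T = 0"
proof -
  have "continuous_on {0..T} a" using cont by (rule continuous_on_subset) auto
  then obtain s where "s \<in> {0..T}" "\<forall>t\<in>{0..T}. a t \<le> a s"
    using continuous_attains_sup[of "{0..T}" a] T by auto
  then obtain M where M: "\<And>t. t \<in> {0..T} \<Longrightarrow> a t \<le> M" by blast
  define k where "k t = (h t)^2 * exp (-2*M*t)" for t
  have kder: "(k has_real_derivative 2 * (h t)^2 * (a t - M) * exp (-2*M*t)) (at t within {0..})"
    if "t \<ge> 0" for t
    unfolding k_def power2_eq_square
    by (rule derivative_eq_intros der[OF that] refl)+ (simp add: algebra_simps)
  have "continuous_on {0..} k"
    by (rule cont_from_deriv[OF kder])
  hence kc: "continuous_on {0..T} k" by (rule continuous_on_subset) auto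
  have "k 0 \<ge> k T"
  proof (rule DERIV_nonpos_imp_decreasing_open[OF T _ kc])
    fix t assume t: "0 < t" "t < T"
    have "a t \<le> M" using M t by auto
    hence "2 * (h t)^2 * (a t - M) * exp (-2*M*t) \<le> 0"
      by (simp add: mult_nonneg_nonpos2 mult_nonpos_nonneg)
    thus "\<exists>y. (k has_real_derivative y) (at t) \<and> y \<le> 0"
      using within_to_at[OF kder t(1)] t by auto
  qed
  hence "k T \<le> 0" using h0 by (simp add: k_def)
  moreover have "k T \<ge> 0" by (simp add: k_def)
  ultimately have "k T = 0" by simp
  thus ?thesis by (simp add: k_def)
qed

lemma exp_lim: fixes a::real assumes "a > 0" shows "((\<lambda>t. exp (-(a*t))) \<longlongrightarrow> 0) at_top"
proof -
  have "filterlim (\<lambda>t. a*t) at_top at_top"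
    using assms by (intro filterlim_tendsto_pos_mult_at_top[OF tendsto_const] filterlim_ident) auto
  hence "filterlim (\<lambda>t. -(a*t)) at_bot at_top" by (simp add: filterlim_uminus_at_bot)
  thus ?thesis by (rule filterlim_compose[OF exp_at_bot])
qed

theorem lemma6:
  fixes \<mu> lam :: real and x y :: "real \<Rightarrow> real"
  assumes "\<mu> > 0" and "lam > 0"
    and "(x 0, y 0) \<in> quadQ"
    and "\<And>t. t \<ge> 0 \<Longrightarrow> (x has_real_derivative fx \<mu> lam (x t) (y t)) (at t within {0..})"
    and "\<And>t. t \<ge> 0 \<Longrightarrow> (y has_real_derivative fy \<mu> lam (x t) (y t)) (at t within {0..})"
  shows "((\<lambda>t. (x t, y t)) \<longlongrightarrow> ((\<mu>+1)/(2*\<mu>+3), (\<mu>+1)/(4*\<mu>+6))) at_top"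
proof -
  have y0: "y 0 > 0" using assms(3) by (auto simp: quadQ_def)
  define u0 where "u0 = x 0 - 2 * y 0"
  define k where "k = u0 / y 0"
  define A where "A = \<mu> + 1"
  define c where "c = 4*\<mu> + 6"
  have Apos: "A > 0" and cpos: "c > 0" using assms(1) by (auto simp: A_def c_def)
  have xc: "continuous_on {0..} x" by (rule cont_from_deriv[OF assms(4)])
  have yc: "continuous_on {0..} y" by (rule cont_from_deriv[OF assms(5)])
  define h where "h t = (x t - 2 * y t) * y 0 * exp (lam*\<mu>*t) - u0 * y t" for t
  have hder: "(h has_real_derivative (lam * (\<mu> + 1 - 4*\<mu>*y t - 2*x t - 2*y t)) * h t) (at t within {0..})"
    if t: "t \<ge> 0" for t
    unfolding h_def
    apply (rule derivative_eq_intros assms(4)[OF t] assms(5)[OF t] refl)+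
    apply (simp add: fx_def fy_def power2_eq_square algebra_simps)
    done
  have hz: "h t = 0" if "t \<ge> 0" for t
    by (rule linear_zero[OF _ hder _ that]) (auto intro!: continuous_intros xc yc simp: h_def u0_def)
  have ueq: "x t = 2 * y t + k * y t * exp (-(lam*\<mu>*t))" if "t \<ge> 0" for t
  proof -
    have "(x t - 2 * y t) * y 0 * exp (lam*\<mu>*t) = u0 * y t" using hz[OF that] by (simp add: h_def)
    hence "x t - 2 * y t = u0 * y t / (y 0 * exp (lam*\<mu>*t))" using y0 by (simp add: field_simps)
    thus ?thesis using y0 by (simp add: k_def exp_minus field_simps)
  qed
  define B where "B t = c + 2*k*exp (-(lam*\<mu>*t))" for t
  define Z where "Z t = exp (-(lam*A*t)) * inverse (y 0) + (c/A)*(1 - exp (-(lam*A*t))) + 2*k*(exp (-(lam*\<mu>*t)) - exp (-(lam*A*t)))" for t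
  define w where "w t = y t * Z t - 1" for t
  have fyeq: "fy \<mu> lam (x t) (y t) = lam * y t * (A - B t * y t)" if "t \<ge> 0" for t
    using ueq[OF that] by (simp add: fy_def A_def B_def c_def power2_eq_square algebra_simps)
  have Zder: "(Z has_real_derivative (-(lam*A*Z t) + lam * B t)) (at t within {0..})" for t
  proof -
    have alg: "-(lam*A)*E1 * inverse (y 0) + (c/A)*(lam*A*E1) + 2*k*(-(lam*\<mu>)*E2 + lam*A*E1)
       = -(lam*A*(E1 * inverse (y 0) + (c/A)*(1 - E1) + 2*k*(E2 - E1))) + lam * (c + 2*k*E2)" for E1 E2
      using Apos y0 by (simp add: field_simps) (simp add: A_def algebra_simps)
    have "(Z has_real_derivative -(lam*A)*exp (-(lam*A*t)) * inverse (y 0) + (c/A)*(lam*A*exp (-(lam*A*t)))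
         + 2*k*(-(lam*\<mu>)*exp (-(lam*\<mu>*t)) + lam*A*exp (-(lam*A*t)))) (at t within {0..})" (is "(_ has_real_derivative ?D) _")
      unfolding Z_def
      apply (rule derivative_eq_intros refl)+
      using y0 apply (simp_all add: algebra_simps)
      done
    moreover have "?D = -(lam*A*Z t) + lam * B t" unfolding Z_def B_def by (rule alg)
    ultimately show ?thesis by simp
  qed
  have wder: "(w has_real_derivative (-(lam * B t * y t)) * w t) (at t within {0..})"
    if t: "t \<ge> 0" for t
    unfolding w_def
    apply (rule derivative_eq_intros assms(5)[OF t] Zder refl)+
    apply (simp add: fyeq[OF t] algebra_simps)
    done
  have wz: "w t = 0" if "t \<ge> 0" for t
    by (rule linear_zero[OF _ wder _ that]) (use y0 in \<open>auto intro!: continuous_intros yc simp: w_def B_def Z_def\<close>)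
  have yeq: "y t = inverse (Z t)" if "t \<ge> 0" for t
  proof -
    have "y t * Z t = 1" using wz[OF that] by (simp add: w_def)
    thus ?thesis by (metis inverse_unique mult.commute)
  qed
  have e1: "((\<lambda>t. exp (-(lam*A*t))) \<longlongrightarrow> 0) at_top"
    using exp_lim[of "lam*A"] Apos assms(2) by (simp add: mult.assoc)
  have e2: "((\<lambda>t. exp (-(lam*\<mu>*t))) \<longlongrightarrow> 0) at_top"
    using exp_lim[of "lam*\<mu>"] assms(1,2) by (simp add: mult.assoc)
  have Zlim: "(Z \<longlongrightarrow> c/A) at_top"
    unfolding Z_def
    by (rule tendsto_eq_intros e1 e2 refl)+ simp
  have ev: "eventually (\<lambda>t::real. t \<ge> 0) at_top" by (simp add: eventually_ge_at_top)
  have ylim: "(y \<longlongrightarrow> A/c) at_top"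
  proof -
    have "((\<lambda>t. inverse (Z t)) \<longlongrightarrow> inverse (c/A)) at_top"
      using Zlim Apos cpos by (intro tendsto_inverse) auto
    hence "((\<lambda>t. inverse (Z t)) \<longlongrightarrow> A/c) at_top" by simp
    thus ?thesis
      by (rule Lim_transform_eventually) (use ev in \<open>eventually_elim, simp add: yeq\<close>)
  qed
  have xlim: "(x \<longlongrightarrow> 2*(A/c) + k*(A/c)*0) at_top"
  proof -
    have "((\<lambda>t. 2 * y t + k * y t * exp (-(lam*\<mu>*t))) \<longlongrightarrow> 2*(A/c) + k*(A/c)*0) at_top"
      by (intro tendsto_intros ylim e2)
    thus ?thesis
      by (rule Lim_transform_eventually) (use ev in \<open>eventually_elim, simp add: ueq\<close>)
  qed
  have "((\<lambda>t. (x t, y t)) \<longlongrightarrow> (2*(A/c) + k*(A/c)*0, A/c)) at_top"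
    by (rule tendsto_Pair[OF xlim ylim])
  moreover have e1: "2*(A/c) + k*(A/c)*0 = (\<mu>+1)/(2*\<mu>+3)"
  proof -
    have "4*\<mu>+6 = 2*(2*\<mu>+3)" by simp
    hence "2*(A/c) = 2*(\<mu>+1)/(2*(2*\<mu>+3))" unfolding A_def c_def by simp
    also have "\<dots> = (\<mu>+1)/(2*\<mu>+3)" by (rule mult_divide_mult_cancel_left) simp
    finally show ?thesis by simp
  qed
  moreover have e2: "A/c = (\<mu>+1)/(4*\<mu>+6)" unfolding A_def c_def by simp
  ultimately show ?thesis by (simp only:)
qed

end
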